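(* Let $(F_n)_{n\ge 0}$ be the Fibonacci numbers, $F_0=0$, $F_1=F_2=1$, $F_{n+2}=F_{n+1}+F_n$. Let $\mathbf{P}$ be the Fibonacci cobweb poset on the set of positive integers, defined as follows: for $k\ge 1$ the $k$-th level is the set $\Phi_k=\{x\in\mathbb{N}: F_{k+1}\le x\le F_{k+2}-1\}$ (so $|\Phi_k|=F_k$, and the levels partition $\{1,2,3,\dots\}$), and for $x\in\Phi_k$, $y\in\Phi_n$ we have $x\le y$ in $\mathbf{P}$ if and only if $x=y$ or $k<n$. Let $\mu$ be the M\"obius function of $\mathbf{P}$, i.e. the function on pairs of elements of $\mathbf{P}$ determined by $\mu(x,x)=1$ for all $x$, $\mu(x,y)=-\sum_{z:\,x\le z<y}\mu(x,z)$ for $x<y$, and $\mu(x,y)=0$ when $x\not\le y$. Then for $x\in\Phi_k$ and $y\in\Phi_n$: $$\mu(x,y)=\begin{cases} 0 & \text{if } x>y \text{ (as integers)},\\ 1 & \text{if } x=y,\\ 0 & \text{if } n=k \text{ and } x\neq y,\\ -1 & \text{if } n=k+1,\\ -\prod_{l=k+1}^{n-1}(1-F_l) & \text{if } n>k+1.\end{cases}$$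
   Context: The M\"obius function $\mu$ of a locally finite poset is the inverse of its zeta function $\zeta$ ($\zeta(x,y)=1$ if $x\le y$, $0$ otherwise) in the incidence algebra, where the product is $(f*g)(x,y)=\sum_{x\le z\le y}f(x,z)g(z,y)$; equivalently it is given by the recursion stated in the claim. In the cobweb poset, every element of level $k$ is below every element of every higher level, and distinct elements of the same level are incomparable. *)

theory Defs
  imports Main "HOL-Number_Theory.Fib"
begin

definition Phi :: "nat \<Rightarrow> nat set" where
  "Phi k = {x. fib (k + 1) \<le> x \<and> x \<le> fib (k + 2) - 1}"

definition cob_le :: "nat \<Rightarrow> nat \<Rightarrow> bool" where
  "cob_le x y \<longleftrightarrow> x \<ge> 1 \<and> y \<ge> 1 \<and>
     (x = y \<or> (\<exists>k n. k \<ge> 1 \<and> n \<ge> 1 \<and> x \<in> Phi k \<and> y \<in> Phi n \<and> k < n))"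

definition cob_lt :: "nat \<Rightarrow> nat \<Rightarrow> bool" where
  "cob_lt x y \<longleftrightarrow> cob_le x y \<and> x \<noteq> y"

definition is_cob_moebius :: "(nat \<Rightarrow> nat \<Rightarrow> int) \<Rightarrow> bool" where
  "is_cob_moebius mu \<longleftrightarrow>
     (\<forall>x. x \<ge> 1 \<longrightarrow> mu x x = 1) \<and>
     (\<forall>x y. cob_lt x y \<longrightarrow> mu x y = - (\<Sum>z \<in> {z. cob_le x z \<and> cob_lt z y}. mu x z)) \<and>
     (\<forall>x y. x \<ge> 1 \<longrightarrow> y \<ge> 1 \<longrightarrow> \<not> cob_le x y \<longrightarrow> mu x y = 0)"

end

theory Submission
  imports Defs
begin

lemma fib_ge1: "n \<ge> 1 \<Longrightarrow> fib n \<ge> 1"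
  using fib_neq_0_nat[of n] by simp

lemma Phi_bounds: "m \<ge> 1 \<Longrightarrow> z \<in> Phi m \<Longrightarrow> fib (m+1) \<le> z \<and> z < fib (m+2)"
  unfolding Phi_def using fib_ge1[of "m+1"] by auto

lemma Phi_pos: "m \<ge> 1 \<Longrightarrow> z \<in> Phi m \<Longrightarrow> z \<ge> 1"
  using Phi_bounds fib_ge1[of "m+1"] by fastforce

lemma Phi_lt: "k \<ge> 1 \<Longrightarrow> m \<ge> 1 \<Longrightarrow> k < m \<Longrightarrow> x \<in> Phi k \<Longrightarrow> z \<in> Phi m \<Longrightarrow> x < z"
proof -
  assume a: "k \<ge> 1" "m \<ge> 1" "k < m" "x \<in> Phi k" "z \<in> Phi m"
  have "fib (k+2) \<le> fib (m+1)" using a(3) by (intro fib_mono) simp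
  thus "x < z" using Phi_bounds[OF a(1,4)] Phi_bounds[OF a(2,5)] by linarith
qed

lemma Phi_unique: "k \<ge> 1 \<Longrightarrow> m \<ge> 1 \<Longrightarrow> x \<in> Phi k \<Longrightarrow> x \<in> Phi m \<Longrightarrow> k = m"
  by (metis Phi_lt less_irrefl linorder_neqE_nat)

lemma card_Phi: "card (Phi m) = fib m"
proof -
  have "Phi m = {fib (m+1)..fib (m+2) - 1}" unfolding Phi_def by auto
  moreover have "fib (m+2) = fib (m+1) + fib m" by simp
  ultimately show ?thesis
    by (cases "fib m") (auto simp: fib_neq_0_nat)
qed

lemma finite_Phi: "finite (Phi m)"
  unfolding Phi_def by (rule finite_subset[of _ "{..fib (m+2)}"]) auto

lemma the_set:
  assumes "k \<ge> 1" "n \<ge> 1" "k < n" "x \<in> Phi k" "y \<in> Phi n"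
  shows "{z. cob_le x z \<and> cob_lt z y} = insert x (\<Union>m\<in>{k<..<n}. Phi m)"
proof (intro set_eqI iffI)
  fix z assume "z \<in> {z. cob_le x z \<and> cob_lt z y}"
  hence z: "cob_le x z" "cob_lt z y" by auto
  show "z \<in> insert x (\<Union>m\<in>{k<..<n}. Phi m)"
  proof (cases "z = x")
    case False
    then obtain k' m where h: "k' \<ge> 1" "m \<ge> 1" "x \<in> Phi k'" "z \<in> Phi m" "k' < m"
      using z(1) unfolding cob_le_def by auto
    have "k' = k" using Phi_unique[OF h(1) assms(1) h(3) assms(4)] .
    obtain m' n' where h2: "m' \<ge> 1" "n' \<ge> 1" "z \<in> Phi m'" "y \<in> Phi n'" "m' < n'"
      using z(2) unfolding cob_lt_def cob_le_def by auto
    have "m' = m" using Phi_unique[OF h2(1) h(2) h2(3) h(4)] .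
    have "n' = n" using Phi_unique[OF h2(2) assms(2) h2(4) assms(5)] .
    thus ?thesis using h h2 \<open>k' = k\<close> \<open>m' = m\<close> by auto
  qed simp
next
  fix z assume z: "z \<in> insert x (\<Union>m\<in>{k<..<n}. Phi m)"
  have x1: "x \<ge> 1" "y \<ge> 1" using Phi_pos assms by blast+
  show "z \<in> {z. cob_le x z \<and> cob_lt z y}"
  proof (cases "z = x")
    case True
    have "x < y" using Phi_lt[OF assms(1,2,3,4,5)] .
    moreover have "cob_le x y" unfolding cob_le_def using x1 assms by blast
    ultimately show ?thesis using True x1 unfolding cob_le_def cob_lt_def by auto
  next
    case False
    then obtain m where m: "k < m" "m < n" "z \<in> Phi m" using z by auto
    have "m \<ge> 1" using m assms by simp
    hence "z \<ge> 1" using Phi_pos m by blast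
    moreover have "z \<noteq> y" using Phi_lt[OF \<open>m \<ge> 1\<close> assms(2) m(2) m(3) assms(5)] by simp
    moreover have "cob_le x z" unfolding cob_le_def using x1 m assms \<open>m \<ge> 1\<close> \<open>z \<ge> 1\<close> by blast
    moreover have "cob_le z y" unfolding cob_le_def using x1 m assms \<open>m \<ge> 1\<close> \<open>z \<ge> 1\<close> by blast
    ultimately show ?thesis unfolding cob_lt_def by auto
  qed
qed

definition PP :: "nat \<Rightarrow> nat \<Rightarrow> int" where
  "PP k m = (\<Prod>l\<in>{k<..<m}. (1 - int (fib l)))"

lemma PP_rec: "1 - (\<Sum>m'\<in>{k<..<k+1+d}. int (fib m') * PP k m') = PP k (k+1+d)"
proof (induction d)
  case 0
  have "{k<..<Suc k} = {}" by auto
  then show ?case by (simp add: PP_def)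
next
  case (Suc d)
  have e: "{k<..<k+1+Suc d} = insert (k+1+d) {k<..<k+1+d}" by auto
  have "PP k (k+1+Suc d) = (1 - int (fib (k+1+d))) * PP k (k+1+d)"
    unfolding PP_def e by (subst prod.insert) auto
  moreover have "(\<Sum>m'\<in>{k<..<k+1+Suc d}. int (fib m') * PP k m')
     = int (fib (k+1+d)) * PP k (k+1+d) + (\<Sum>m'\<in>{k<..<k+1+d}. int (fib m') * PP k m')"
    unfolding e by (subst sum.insert) auto
  ultimately show ?case using Suc by (simp add: algebra_simps)
qed

lemma main_val:
  assumes mu: "is_cob_moebius mu" and k: "k \<ge> 1" and x: "x \<in> Phi k"
  shows "k < n \<Longrightarrow> y \<in> Phi n \<Longrightarrow> mu x y = - PP k n"
proof (induction n arbitrary: y rule: less_induct)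
  case (less n)
  have n1: "n \<ge> 1" using less k by simp
  have x1: "x \<ge> 1" using Phi_pos k x by blast
  have y1: "y \<ge> 1" using Phi_pos n1 less by blast
  have "x < y" using Phi_lt k n1 less x by blast
  moreover have "\<exists>k\<ge>1. \<exists>n\<ge>1. x \<in> Phi k \<and> y \<in> Phi n \<and> k < n"
    using k n1 x less(2,3) by blast
  ultimately have lt: "cob_lt x y" using x1 y1 unfolding cob_lt_def cob_le_def by auto
  have xn: "x \<notin> (\<Union>m\<in>{k<..<n}. Phi m)"
  proof
    assume "x \<in> (\<Union>m\<in>{k<..<n}. Phi m)"
    then obtain m where "k < m" "x \<in> Phi m" by auto
    moreover have "m \<ge> 1" using \<open>k < m\<close> k by simp
    ultimately show False using Phi_unique[OF k _ x] by fastforce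
  qed
  have fin: "finite (\<Union>m\<in>{k<..<n}. Phi m)" using finite_Phi by auto
  have "mu x y = - (\<Sum>z \<in> insert x (\<Union>m\<in>{k<..<n}. Phi m). mu x z)"
    using mu lt the_set[OF k n1 less(2) x less(3)] unfolding is_cob_moebius_def by auto
  also have "\<dots> = - (1 + (\<Sum>z \<in> (\<Union>m\<in>{k<..<n}. Phi m). mu x z))"
    using xn fin mu x1 unfolding is_cob_moebius_def by (subst sum.insert) auto
  also have "(\<Sum>z \<in> (\<Union>m\<in>{k<..<n}. Phi m). mu x z) = (\<Sum>m\<in>{k<..<n}. \<Sum>z\<in>Phi m. mu x z)"
  proof (rule sum.UNION_disjoint)
    show "\<forall>i\<in>{k<..<n}. \<forall>j\<in>{k<..<n}. i \<noteq> j \<longrightarrow> Phi i \<inter> Phi j = {}"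
    proof (intro ballI impI)
      fix i j assume ij: "i \<in> {k<..<n}" "j \<in> {k<..<n}" "i \<noteq> j"
      hence "i \<ge> 1" "j \<ge> 1" using k by auto
      thus "Phi i \<inter> Phi j = {}" using Phi_unique ij(3) by blast
    qed
  qed (auto simp: finite_Phi)
  also have "\<dots> = (\<Sum>m\<in>{k<..<n}. int (fib m) * (- PP k m))"
  proof (rule sum.cong)
    fix m assume "m \<in> {k<..<n}"
    hence "\<forall>z\<in>Phi m. mu x z = - PP k m" using less by auto
    thus "(\<Sum>z\<in>Phi m. mu x z) = int (fib m) * (- PP k m)" by (simp add: card_Phi)
  qed simp
  finally have fin: "mu x y = - (1 + (\<Sum>m\<in>{k<..<n}. int (fib m) * (- PP k m)))" .
  have nn: "k+1+(n-k-1) = n" using less by simp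
  show ?case using fin PP_rec[of k "n-k-1", unfolded nn] by (simp add: sum_negf)
qed

theorem mainTheorem1:
  fixes mu :: "nat \<Rightarrow> nat \<Rightarrow> int" and x y k n :: nat
  assumes "is_cob_moebius mu"
    and "k \<ge> 1" and "n \<ge> 1" and "x \<in> Phi k" and "y \<in> Phi n"
  shows "(x > y \<longrightarrow> mu x y = 0) \<and>
         (x = y \<longrightarrow> mu x y = 1) \<and>
         (n = k \<and> x \<noteq> y \<longrightarrow> mu x y = 0) \<and>
         (n = k + 1 \<longrightarrow> mu x y = -1) \<and>
         (n > k + 1 \<longrightarrow> mu x y = - (\<Prod>l = k + 1..n - 1. (1 - int (fib l))))"
proof -
  have x1: "x \<ge> 1" and y1: "y \<ge> 1" using Phi_pos assms by blast+
  have nle: "mu x y = 0" if "\<not> cob_le x y" using assms x1 y1 that unfolding is_cob_moebius_def by blast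
  have notle: "\<not> cob_le x y" if nk: "\<not> k < n" "x \<noteq> y"
  proof
    assume "cob_le x y"
    then obtain k' n' where h: "k' \<ge> 1" "n' \<ge> 1" "x \<in> Phi k'" "y \<in> Phi n'" "k' < n'"
      using nk unfolding cob_le_def by auto
    have "k' = k" "n' = n" using Phi_unique h assms by blast+
    thus False using h nk by simp
  qed
  have A: "x > y \<longrightarrow> mu x y = 0"
  proof
    assume "x > y"
    hence "\<not> k < n" using Phi_lt assms by (metis not_less_iff_gr_or_eq order_less_trans)
    thus "mu x y = 0" using notle nle \<open>x > y\<close> by simp
  qed
  have B: "x = y \<longrightarrow> mu x y = 1" using assms x1 unfolding is_cob_moebius_def by auto
  have C: "n = k \<and> x \<noteq> y \<longrightarrow> mu x y = 0" using notle nle by auto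
  have D: "k < n \<Longrightarrow> mu x y = - PP k n" using main_val assms by blast
  have E: "{k+1..n-1} = {k<..<n}" using assms by auto
  show ?thesis using A B C D E by (auto simp: PP_def)
qed

end
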